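(* Let $d\in R$ be a nonzero square-free element, let $f=\tfrac{g}{d}\in\mathbb{K}[x]$ with $g\in R[x]$ be a polynomial of degree $k\ge 1$, and let $a_0,a_1,\ldots,a_k$ be a $d$-sequence of length $k$ for $S$. For an irreducible $\pi\in R$, let $s_\pi\in\{1,2,\ldots\}\cup\{\infty\}$ denote the number of distinct residue classes modulo $\pi$ that contain an element of $S$ (i.e. the maximal number of elements of $S$ pairwise incongruent modulo $\pi$). Then $f\in\mathrm{Int}(S,R)$ if and only if, for every irreducible $\pi$ dividing $d$, one has $\pi\mid g(a_i)$ for all integers $0\le i\le \min(s_\pi,k)$.
   Context: Let $R$ be a unique factorization domain with field of fractions $\mathbb{K}$, and let $S\subseteq R$ be a nonempty subset. Define $\mathrm{Int}(S,R)=\{f\in\mathbb{K}[x]: f(a)\in R \text{ for all } a\in S\}$. For an irreducible $\pi\in R$, $R_{(\pi)}$ denotes the localization of $R$ at the prime ideal $(\pi)$, $\mathrm{Int}(S,R_{(\pi)})=\{f\in\mathbb{K}[x]: f(a)\in R_{(\pi)} \text{ for all } a\in S\}$, and $v_\pi$ denotes the $\pi$-adic valuation. An element of $R$ is square-free if it is not divisible by the square of any irreducible element. $\pi$-sequence: for an irreducible $\pi\in R$ and a positive integer $k$, a $\pi$-sequence of length $k$ in $S$ is a sequence $u_0,u_1,\ldots,u_k$ of distinct elements of $S$ such that for every $1\le m\le k$, $$\frac{(x-u_0)(x-u_1)\cdots(x-u_{m-1})}{(u_m-u_0)(u_m-u_1)\cdots(u_m-u_{m-1})}\in\mathrm{Int}(S,R_{(\pi)}).$$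 $d$-sequence: let $d\in R$ be nonzero and $k$ a positive integer. Let $\pi_1,\ldots,\pi_r$ be a complete list of pairwise non-associate irreducible elements of $R$ dividing $d$. For each $1\le j\le r$ choose a $\pi_j$-sequence $u_{0j},u_{1j},\ldots,u_{kj}$ of length $k$ in $S$, and let $e_j=v_{\pi_j}\big((u_{kj}-u_{0j})(u_{kj}-u_{1j})\cdots(u_{kj}-u_{k-1,j})\big)$. A $d$-sequence of length $k$ (for $S$) is any sequence $a_0,a_1,\ldots,a_k$ of elements of $R$ satisfying $$a_i\equiv u_{ij}\pmod{\pi_j^{e_j+1}}\quad\text{for all } 0\le i\le k,\ 1\le j\le r.$$ (Such sequences exist by the Chinese remainder theorem; they depend on the choices made, and the $a_i$ need not lie in $S$.) *)

theory Defs
  imports "HOL-Computational_Algebra.Computational_Algebra" "HOL-Library.Extended_Nat"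
begin

text \<open>R is modelled by a type 'a of class {factorial_semiring, idom} (a UFD); its field of
fractions is 'a fract, with the embedding to_fract.\<close>

definition IntSR :: "'a::idom set \<Rightarrow> 'a fract poly set" where
  "IntSR S = {f. \<forall>a\<in>S. poly f (to_fract a) \<in> range to_fract}"

definition loc_at :: "'a::idom \<Rightarrow> 'a fract set" where
  "loc_at p = {Fract r s | r s. \<not> p dvd s}"

definition IntS_loc :: "'a::idom set \<Rightarrow> 'a \<Rightarrow> 'a fract poly set" where
  "IntS_loc S p = {f. \<forall>a\<in>S. poly f (to_fract a) \<in> loc_at p}"

definition pi_sequence :: "'a::idom \<Rightarrow> 'a set \<Rightarrow> nat \<Rightarrow> (nat \<Rightarrow> 'a) \<Rightarrow> bool" where
  "pi_sequence p S k u \<longleftrightarrow>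
     (\<forall>i\<le>k. u i \<in> S) \<and> inj_on u {..k} \<and>
     (\<forall>m\<in>{1..k}.
        smult (inverse (to_fract (\<Prod>i<m. u m - u i))) (\<Prod>i<m. [:- to_fract (u i), 1:])
          \<in> IntS_loc S p)"

text \<open>d-sequence a_0,...,a_k of length k for S.  The complete list of pairwise
non-associate irreducible divisors of d is taken to be prime_factors d
(the normalized prime = irreducible factors of d).\<close>
definition d_sequence :: "'a::{factorial_semiring,idom} \<Rightarrow> 'a set \<Rightarrow> nat \<Rightarrow> (nat \<Rightarrow> 'a) \<Rightarrow> bool" where
  "d_sequence d S k a \<longleftrightarrow>
     (\<exists>u::'a \<Rightarrow> nat \<Rightarrow> 'a. \<forall>p\<in>prime_factors d.
        pi_sequence p S k (u p) \<and>
        (\<forall>i\<le>k. p ^ (multiplicity p (\<Prod>j<k. u p k - u p j) + 1) dvd (a i - u p i)))"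

definition res_count :: "'a::comm_ring_1 \<Rightarrow> 'a set \<Rightarrow> enat" where
  "res_count p S = (let C = (\<lambda>a. {b. p dvd (b - a)}) ` S in
                     if finite C then enat (card C) else \<infinity>)"

definition square_free :: "'a::comm_semiring_1 \<Rightarrow> bool" where
  "square_free d \<longleftrightarrow> \<not> (\<exists>p. irreducible p \<and> p ^ 2 dvd d)"

end

theory Submission imports Defs begin

lemma poly_to_fract: "poly (map_poly to_fract g) (to_fract x) = to_fract (poly g x)"
  by (induct g) (auto simp: map_poly_pCons)

lemma poly_diff_dvd: "(x - y :: 'a::comm_ring_1) dvd poly g x - poly g y"
proof (induct g)
  case 0 then show ?case by simp
next
  case (pCons c p)
  have "poly (pCons c p) x - poly (pCons c p) y = (x - y) * poly p x + y * (poly p x - poly p y)"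
    by (simp add: algebra_simps)
  with pCons show ?case by simp
qed

lemma prime_congr_poly:
  fixes p :: "'a::{factorial_semiring,idom}"
  assumes "p dvd x - y"
  shows "p dvd poly g x \<longleftrightarrow> p dvd poly g y"
proof -
  have "p dvd poly g x - poly g y" using assms(1) poly_diff_dvd dvd_trans by blast
  moreover have "poly g x = (poly g x - poly g y) + poly g y" by simp
  ultimately show ?thesis by (metis dvd_add_right_iff)
qed

lemma poly_vanish_mod:
  fixes p :: "'a::{factorial_semiring,idom}"
  assumes "prime p" "degree g \<le> n"
    "\<And>i j. i \<le> n \<Longrightarrow> j \<le> n \<Longrightarrow> i \<noteq> j \<Longrightarrow> \<not> p dvd b i - b j"
    "\<And>i. i \<le> n \<Longrightarrow> p dvd poly g (b i)"
  shows "p dvd poly g x"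
  using assms(2-)
proof (induct n arbitrary: g b)
  case 0
  then obtain c where "g = [:c:]" using degree0_coeffs by (metis le_zero_eq)
  with 0(3)[of 0] show ?case by simp
next
  case (Suc n)
  define h where "h = synthetic_div g (b 0)"
  have eq: "\<And>z. poly g z = (z - b 0) * poly h z + poly g (b 0)"
  proof -
    fix z
    have E: "[:-b 0,1:] * h + [:poly g (b 0):] = g" unfolding h_def by (rule synthetic_div_correct')
    from arg_cong[where f="\<lambda>q. poly q z", OF E] show "poly g z = (z - b 0) * poly h z + poly g (b 0)"
      by (simp add: algebra_simps)
  qed
  have "degree h \<le> n" unfolding h_def using Suc(2) by (simp add: degree_synthetic_div)
  moreover have "\<And>i j. i \<le> n \<Longrightarrow> j \<le> n \<Longrightarrow> i \<noteq> j \<Longrightarrow> \<not> p dvd b (Suc i) - b (Suc j)"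
    using Suc(3) by auto
  moreover have "p dvd poly h (b (Suc i))" if "i \<le> n" for i
  proof -
    have "p dvd poly g (b (Suc i)) - poly g (b 0)" using Suc(4) that by auto
    hence "p dvd (b (Suc i) - b 0) * poly h (b (Suc i))" using eq[of "b (Suc i)"] by simp
    moreover have "\<not> p dvd b (Suc i) - b 0" using Suc(3)[of "Suc i" 0] that by auto
    ultimately show ?thesis using assms(1) prime_dvd_mult_iff by blast
  qed
  ultimately have "p dvd poly h x" using Suc(1)[of h "\<lambda>i. b (Suc i)"] by blast
  then show ?case using eq[of x] Suc(4)[of 0] by simp
qed

lemma to_fract_prod: "to_fract (\<Prod>i\<in>A. f i) = (\<Prod>i\<in>A. to_fract (f i))"
  by (induct A rule: infinite_finite_induct) auto

lemma squarefree_dvd: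
  fixes d :: "'a::{factorial_semiring,idom}"
  assumes "d \<noteq> 0" "square_free d" "\<And>q. prime q \<Longrightarrow> q dvd d \<Longrightarrow> q dvd y"
  shows "d dvd y"
proof (cases "y = 0")
  case False
  show ?thesis
  proof (rule multiplicity_le_imp_dvd[OF assms(1)])
    fix q :: 'a assume q: "prime q"
    show "multiplicity q d \<le> multiplicity q y"
    proof (cases "multiplicity q d = 0")
      case False
      then have qd: "q dvd d" using multiplicity_gt_zero_iff[OF assms(1)] q
        by (metis bot_nat_0.not_eq_extremum not_prime_unit)
      have "multiplicity q d \<le> 1"
      proof (rule ccontr)
        assume "\<not> ?thesis"
        then have "q ^ 2 dvd d" by (intro multiplicity_dvd') simp
        moreover have "irreducible q" using q by (simp add: prime_elem_imp_irreducible)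
        ultimately show False using assms(2) unfolding square_free_def by blast
      qed
      moreover have "multiplicity q y > 0"
        using multiplicity_gt_zero_iff[OF \<open>y \<noteq> 0\<close>] q assms(3)[OF q qd] not_prime_unit by blast
      ultimately show ?thesis by linarith
    qed simp
  qed
qed simp

lemma Fract_in_range: "(d::'a::idom) \<noteq> 0 \<Longrightarrow> Fract y d \<in> range to_fract \<longleftrightarrow> d dvd y"
proof
  assume d: "d \<noteq> 0"
  assume "Fract y d \<in> range to_fract"
  then obtain z where "Fract y d = Fract z 1" by (auto simp: to_fract_def)
  then have "y = z * d" using d by (simp add: eq_fract)
  then show "d dvd y" by simp
next
  assume d: "d \<noteq> 0" "d dvd y"
  then obtain z where "y = d * z" by blast
  then have "Fract y d = to_fract z" using d by (simp add: to_fract_def eq_fract)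
  then show "Fract y d \<in> range to_fract" by simp
qed

lemma pi_seq_new:
  fixes p :: "'a::{factorial_semiring,idom}"
  assumes p: "prime p" and ps: "pi_sequence p S k u" and m: "1 \<le> m" "m \<le> k"
    and b: "b \<in> S" "\<And>i. i < m \<Longrightarrow> \<not> p dvd b - u i"
    and i0: "i0 < m"
  shows "\<not> p dvd u m - u i0"
proof
  assume h: "p dvd u m - u i0"
  define D where "D = (\<Prod>i<m. u m - u i)"
  define N where "N = (\<Prod>i<m. b - u i)"
  have "D \<noteq> 0" unfolding D_def
  proof
    assume "(\<Prod>i<m. u m - u i) = 0"
    then obtain i where "i < m" "u m - u i = 0" by auto
    moreover have "inj_on u {..k}" using ps unfolding pi_sequence_def by blast
    ultimately show False using m by (auto dest: inj_onD)
  qed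
  have pD: "p dvd D" unfolding D_def using h i0 p by (auto simp: prime_dvd_prod_iff)
  have "\<not> p dvd N" unfolding N_def using b(2) p by (simp add: prime_dvd_prod_iff)
  have "smult (inverse (to_fract D)) (\<Prod>i<m. [:- to_fract (u i), 1:]) \<in> IntS_loc S p"
    using ps m unfolding pi_sequence_def D_def by auto
  then have "poly (smult (inverse (to_fract D)) (\<Prod>i<m. [:- to_fract (u i), 1:])) (to_fract b) \<in> loc_at p"
    using b unfolding IntS_loc_def by auto
  moreover have "poly (smult (inverse (to_fract D)) (\<Prod>i<m. [:- to_fract (u i), 1:])) (to_fract b) = Fract N D"
  proof -
    have "poly (smult (inverse (to_fract D)) (\<Prod>i<m. [:- to_fract (u i), 1:])) (to_fract b) = inverse (to_fract D) * to_fract N"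
      by (simp add: poly_prod N_def to_fract_prod)
    also have "\<dots> = Fract N D" by (simp add: to_fract_def)
    finally show ?thesis .
  qed
  ultimately obtain r s where rs: "Fract N D = Fract r s" "\<not> p dvd s" unfolding loc_at_def by auto
  then have "s \<noteq> 0" by auto
  with rs \<open>D \<noteq> 0\<close> have "N * s = r * D" by (simp add: eq_fract)
  then have "p dvd N * s" using pD by (metis dvd_mult)
  then show False using p rs(2) \<open>\<not> p dvd N\<close> by (simp add: prime_dvd_mult_iff)
qed

definition incong :: "'a::comm_ring_1 \<Rightarrow> (nat \<Rightarrow> 'a) \<Rightarrow> nat \<Rightarrow> bool" where
  "incong p u j \<longleftrightarrow> (\<forall>i<j. \<forall>i'<j. i \<noteq> i' \<longrightarrow> \<not> p dvd u i - u i')"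

lemma res_count_ge:
  assumes "\<And>i. i < j \<Longrightarrow> u i \<in> S" "incong p u j"
  shows "enat j \<le> res_count p S"
proof -
  define cl where "cl = (\<lambda>a. {b. p dvd b - a})"
  have inj: "inj_on (cl \<circ> u) {..<j}"
  proof (rule inj_onI)
    fix i i' assume ii: "i \<in> {..<j}" "i' \<in> {..<j}" "(cl \<circ> u) i = (cl \<circ> u) i'"
    have "u i \<in> cl (u i)" unfolding cl_def by simp
    then have "u i \<in> cl (u i')" using ii(3) by simp
    then have "p dvd u i - u i'" unfolding cl_def by simp
    then show "i = i'" using assms(2) ii unfolding incong_def by auto
  qed
  have sub: "(cl \<circ> u) ` {..<j} \<subseteq> cl ` S" using assms(1) by auto
  show ?thesis
  proof (cases "finite (cl ` S)")
    case True
    have "j = card ((cl \<circ> u) ` {..<j})" using card_image[OF inj] by simp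
    also have "\<dots> \<le> card (cl ` S)" using True sub by (rule card_mono)
    finally show ?thesis using True unfolding res_count_def cl_def[symmetric] Let_def by simp
  next
    case False
    then show ?thesis unfolding res_count_def cl_def[symmetric] Let_def by simp
  qed
qed

lemma pi_seq_structure:
  fixes p :: "'a::{factorial_semiring,idom}"
  assumes p: "prime p" and ps: "pi_sequence p S k u"
  shows "j \<le> Suc k \<Longrightarrow> incong p u j \<or> (\<exists>m\<le>k. incong p u m \<and> (\<forall>b\<in>S. \<exists>i<m. p dvd b - u i))"
proof (induct j)
  case 0 then show ?case by (simp add: incong_def)
next
  case (Suc j)
  then have IH: "incong p u j \<or> (\<exists>m\<le>k. incong p u m \<and> (\<forall>b\<in>S. \<exists>i<m. p dvd b - u i))" by simp
  show ?case
  proof (cases "incong p u j")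
    case False then show ?thesis using IH by blast
  next
    case inc: True
    show ?thesis
    proof (cases "\<forall>b\<in>S. \<exists>i<j. p dvd b - u i")
      case True then show ?thesis using inc Suc(2) by auto
    next
      case False
      then obtain b where b: "b \<in> S" "\<And>i. i < j \<Longrightarrow> \<not> p dvd b - u i" by auto
      have new: "\<not> p dvd u j - u i" if "i < j" for i
        using pi_seq_new[OF p ps _ _ b that] that Suc(2) by auto
      have new': "\<not> p dvd u i - u j" if "i < j" for i
      proof
        assume "p dvd u i - u j"
        then have "p dvd -(u i - u j)" by (simp only: dvd_minus_iff)
        then have "p dvd u j - u i" by (simp only: minus_diff_eq)
        then show False using new[OF that] by simp
      qed
      have "incong p u (Suc j)" unfolding incong_def
      proof (intro allI impI)
        fix i i' assume "i < Suc j" "i' < Suc j" "i \<noteq> i'"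
        then show "\<not> p dvd u i - u i'"
          using inc new new' unfolding incong_def
          by (metis less_Suc_eq)
      qed
      then show ?thesis by blast
    qed
  qed
qed

theorem lemma4p2:
  fixes d :: "'a::{factorial_semiring,idom}" and g :: "'a poly" and S :: "'a set"
    and f :: "'a fract poly" and k :: nat and a :: "nat \<Rightarrow> 'a"
  assumes "S \<noteq> {}"
    and "d \<noteq> 0" and "square_free d"
    and "f = smult (inverse (to_fract d)) (map_poly to_fract g)"
    and "degree f = k" and "k \<ge> 1"
    and "d_sequence d S k a"
  shows "f \<in> IntSR S \<longleftrightarrow>
         (\<forall>p. irreducible p \<and> p dvd d \<longrightarrow>
            (\<forall>i::nat. i \<le> k \<and> enat i \<le> res_count p S \<longrightarrow> p dvd poly g (a i)))"
proof -
  have polyf: "poly f (to_fract x) = Fract (poly g x) d" for x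
  proof -
    have "poly f (to_fract x) = inverse (to_fract d) * to_fract (poly g x)"
      using assms(4) by (simp add: poly_to_fract)
    then show ?thesis by (simp add: to_fract_def)
  qed
  have IntSR_iff: "f \<in> IntSR S \<longleftrightarrow> (\<forall>x\<in>S. d dvd poly g x)"
    unfolding IntSR_def using polyf Fract_in_range[OF assms(2)] by simp
  have "degree f = degree g" using assms(2,4)
    by (simp add: degree_map_poly)
  then have degg: "degree g \<le> k" using assms(5) by simp
  obtain u where U: "\<And>q. q \<in> prime_factors d \<Longrightarrow> pi_sequence q S k (u q) \<and>
      (\<forall>i\<le>k. q ^ (multiplicity q (\<Prod>j<k. u q k - u q j) + 1) dvd (a i - u q i))"
    using assms(7) unfolding d_sequence_def by blast
  have cong: "q dvd a i - u q i" if "q \<in> prime_factors d" "i \<le> k" for q i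
  proof -
    have "q ^ (multiplicity q (\<Prod>j<k. u q k - u q j) + 1) dvd (a i - u q i)"
      using U[OF that(1)] that(2) by blast
    moreover have "q dvd q ^ (multiplicity q (\<Prod>j<k. u q k - u q j) + 1)" by simp
    ultimately show ?thesis by (rule dvd_trans[rotated])
  qed
  have inS: "u q i \<in> S" if "q \<in> prime_factors d" "i \<le> k" for q i
    using U[OF that(1)] that(2) unfolding pi_sequence_def by blast
  show ?thesis
  proof
    assume "f \<in> IntSR S"
    then have H: "\<forall>x\<in>S. d dvd poly g x" using IntSR_iff by simp
    show "\<forall>p. irreducible p \<and> p dvd d \<longrightarrow>
            (\<forall>i::nat. i \<le> k \<and> enat i \<le> res_count p S \<longrightarrow> p dvd poly g (a i))"
    proof (intro allI impI)
      fix p i assume pd: "irreducible p \<and> p dvd d" and ik: "i \<le> k \<and> enat i \<le> res_count p S"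
      define q where "q = normalize p"
      have "prime q" unfolding q_def using pd by (simp add: irreducible_imp_prime_elem)
      moreover have "q dvd d" unfolding q_def using pd by simp
      ultimately have qf: "q \<in> prime_factors d" using assms(2) by (simp add: in_prime_factors_iff)
      have "q dvd poly g (u q i)" using H inS[OF qf] ik \<open>q dvd d\<close> dvd_trans by blast
      then have "q dvd poly g (a i)" using prime_congr_poly[OF cong[OF qf]] ik by blast
      then show "p dvd poly g (a i)" unfolding q_def by simp
    qed
  next
    assume H: "\<forall>p. irreducible p \<and> p dvd d \<longrightarrow>
            (\<forall>i::nat. i \<le> k \<and> enat i \<le> res_count p S \<longrightarrow> p dvd poly g (a i))"
    have "\<forall>x\<in>S. d dvd poly g x"
    proof
      fix x assume xS: "x \<in> S"
      show "d dvd poly g x"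
      proof (rule squarefree_dvd[OF assms(2,3)])
        fix q :: 'a assume q: "prime q" "q dvd d"
        then have qf: "q \<in> prime_factors d" using assms(2) by (simp add: in_prime_factors_iff)
        have Hq: "q dvd poly g (a i)" if "i \<le> k" "enat i \<le> res_count q S" for i
          using H q that by (simp add: prime_elem_imp_irreducible)
        have Hv: "q dvd poly g (u q i)" if "i \<le> k" "enat i \<le> res_count q S" for i
          using Hq[OF that] prime_congr_poly[OF cong[OF qf that(1)]] by blast
        have ps: "pi_sequence q S k (u q)" using U[OF qf] by blast
        have inS': "\<And>i. i < j \<Longrightarrow> j \<le> Suc k \<Longrightarrow> u q i \<in> S" for j using inS[OF qf] by simp
        from pi_seq_structure[OF q(1) ps, of "Suc k"]
        consider "incong q (u q) (Suc k)" | m where "m \<le> k" "incong q (u q) m" "\<forall>b\<in>S. \<exists>i<m. q dvd b - u q i"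
          by auto
        then show "q dvd poly g x"
        proof cases
          case 1
          have rc: "enat (Suc k) \<le> res_count q S" using res_count_ge[OF _ 1] inS[OF qf] by simp
          show ?thesis
          proof (rule poly_vanish_mod[OF q(1) degg, of a])
            fix i assume "i \<le> k"
            moreover have "enat i \<le> res_count q S" using rc \<open>i \<le> k\<close>
              by (metis enat_ord_simps(1) le_SucI order_trans)
            ultimately show "q dvd poly g (a i)" using Hq by blast
          next
            fix i j assume ij: "i \<le> k" "j \<le> k" "i \<noteq> j"
            show "\<not> q dvd a i - a j"
            proof
              assume "q dvd a i - a j"
              have "u q i - u q j = (a j - u q j) - (a i - u q i) + (a i - a j)"
                by (simp add: algebra_simps)
              moreover have "q dvd (a j - u q j) - (a i - u q i) + (a i - a j)"
                using cong[OF qf ij(1)] cong[OF qf ij(2)] \<open>q dvd a i - a j\<close>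
                by (intro dvd_add[of q "(a j - u q j) - (a i - u q i)"] dvd_diff[of q "a j - u q j"]) assumption+
              ultimately have "q dvd u q i - u q j" by simp
              then show False using 1 ij unfolding incong_def by auto
            qed
          qed
        next
          case 2
          then obtain i where i: "i < m" "q dvd x - u q i" using xS by blast
          have rc: "enat m \<le> res_count q S" using res_count_ge[OF _ 2(2)] inS[OF qf] 2(1) by simp
          have "enat i \<le> res_count q S" using rc i(1) by (meson enat_ord_simps(1) less_imp_le order_trans)
          then have "q dvd poly g (u q i)" using Hv i 2(1) by simp
          then show ?thesis using prime_congr_poly[OF i(2)] by blast
        qed
      qed
    qed
    then show "f \<in> IntSR S" using IntSR_iff by simp
  qed
qed

end
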